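(* Let $0<s<\tfrac12$. For every $\Phi\in\mathscr{C}_c^\infty(\mathbb{R}^{2n})$ the function $(x,y)\mapsto\frac{\Phi(x,y)-\Phi(x,x)}{|x-y|^{n+2s}}$ belongs to $L^1(\mathbb{R}^{2n})$, and the linear functional $\langle\!\langle S,\Phi\rangle\!\rangle=\iint_{\mathbb{R}^{2n}}\frac{\Phi(x,y)-\Phi(x,x)}{|x-y|^{n+2s}}\,dx\,dy$ defines a distribution in $\mathscr{D}'(\mathbb{R}^{2n})$.
   Context: $\mathscr{D}'(\mathbb{R}^{2n})$ is the space of distributions, i.e. linear functionals on $\mathscr{C}_c^\infty(\mathbb{R}^{2n})$ continuous for its usual inductive limit topology. *)

theory Defs
  imports "HOL-Analysis.Analysis"
begin

fun ddiff :: "('a::real_normed_vector \<Rightarrow> real) \<Rightarrow> 'a list \<Rightarrow> 'a \<Rightarrow> real" where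
  "ddiff f [] = f"
| "ddiff f (v # vs) = (\<lambda>x. frechet_derivative (ddiff f vs) (at x) v)"

definition smooth :: "('a::real_normed_vector \<Rightarrow> real) \<Rightarrow> bool" where
  "smooth f \<longleftrightarrow> (\<forall>vs. \<forall>x. ddiff f vs differentiable (at x))"

definition fsupport :: "('a::topological_space \<Rightarrow> real) \<Rightarrow> 'a set" where
  "fsupport f = closure {x. f x \<noteq> 0}"

definition test_function :: "('a::euclidean_space \<Rightarrow> real) \<Rightarrow> bool" where
  "test_function f \<longleftrightarrow> smooth f \<and> compact (fsupport f)"

definition Cm_seminorm :: "nat \<Rightarrow> ('a::euclidean_space \<Rightarrow> real) \<Rightarrow> real" where
  "Cm_seminorm m f =
     (\<Sum>vs\<in>{vs. set vs \<subseteq> Basis \<and> length vs \<le> m}. (SUP x. \<bar>ddiff f vs x\<bar>))"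

text \<open>Distributions: linear functionals on C_c^infinity continuous for the inductive limit
  topology, i.e. (standard characterization, Hoermander Def. 2.1.1) for every compact K there
  are C, m with |T phi| \<le> C * (C^m seminorm of phi) for all test functions phi supported in K.\<close>
definition is_distribution :: "(('a::euclidean_space \<Rightarrow> real) \<Rightarrow> real) \<Rightarrow> bool" where
  "is_distribution T \<longleftrightarrow>
     (\<forall>f g a b. test_function f \<longrightarrow> test_function g \<longrightarrow>
        T (\<lambda>x. a * f x + b * g x) = a * T f + b * T g) \<and>
     (\<forall>K. compact K \<longrightarrow> (\<exists>C m. \<forall>\<phi>. test_function \<phi> \<longrightarrow> fsupport \<phi> \<subseteq> K \<longrightarrow>
        \<bar>T \<phi>\<bar> \<le> C * Cm_seminorm m \<phi>))"

end

theory Submission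
  imports Defs
begin

lemma one_dim:
  fixes a b :: real assumes ab: "a < 1" "1 < b"
  defines "\<phi> \<equiv> \<lambda>t::real. (if t \<in> {0..1} then t powr (-a) else 0) + (if t \<in> {1..} then t powr (-b) else 0)"
  shows "(\<integral>\<^sup>+t. ennreal (\<phi> t + \<phi> (-t)) \<partial>lborel) < \<infinity>"
proof -
  have m[measurable]: "\<phi> \<in> borel_measurable borel" unfolding \<phi>_def by measurable
  have nn: "\<phi> t \<ge> 0" for t unfolding \<phi>_def by auto
  have h1: "((\<lambda>t. t powr (-a)) has_integral (1 powr (-a+1) / (-a+1))) {0..1}"
    by (rule has_integral_powr_from_0) (use ab in auto)
  have h2: "((\<lambda>t. t powr (-b)) has_integral (-(1 powr (-b+1)) / (-b+1))) {1..}"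
    by (rule has_integral_powr_to_inf) (use ab in auto)
  have "(\<phi> has_integral (1 powr (-a+1) / (-a+1) + (-(1 powr (-b+1)) / (-b+1)))) UNIV"
    unfolding \<phi>_def
    by (intro has_integral_add has_integral_restrict_UNIV[THEN iffD2] h1 h2)
  then have I: "(\<integral>\<^sup>+t. ennreal (\<phi> t) \<partial>lborel) = ennreal (1 powr (-a+1) / (-a+1) + (-(1 powr (-b+1)) / (-b+1)))"
    by (intro nn_integral_has_integral_lborel m nn)
  have "(\<integral>\<^sup>+t. ennreal (\<phi> (-t)) \<partial>lborel) = (\<integral>\<^sup>+t. ennreal (\<phi> t) \<partial>(distr lborel borel uminus))"
    by (subst nn_integral_distr) auto
  also have "\<dots> = (\<integral>\<^sup>+t. ennreal (\<phi> t) \<partial>lborel)" by (simp add: lborel_distr_uminus)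
  finally have I2: "(\<integral>\<^sup>+t. ennreal (\<phi> (-t)) \<partial>lborel) = (\<integral>\<^sup>+t. ennreal (\<phi> t) \<partial>lborel)" .
  have "(\<integral>\<^sup>+t. ennreal (\<phi> t + \<phi> (-t)) \<partial>lborel) = (\<integral>\<^sup>+t. ennreal (\<phi> t) \<partial>lborel) + (\<integral>\<^sup>+t. ennreal (\<phi> (-t)) \<partial>lborel)"
    by (subst nn_integral_add[symmetric]) (auto simp: nn ennreal_plus)
  also have "\<dots> < \<infinity>" unfolding I2 I by simp
  finally show ?thesis .
qed

lemma AE_coords_nonzero: "AE z in lborel. \<forall>b\<in>(Basis::'a::euclidean_space set). z \<bullet> b \<noteq> 0"
proof (rule AE_finite_allI[OF finite_Basis])
  fix b :: 'a assume b: "b \<in> Basis"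
  have "{x::'a. x \<bullet> b = 0} \<in> null_sets lebesgue"
    using negligible_standard_hyperplane[OF b, of 0] negligible_iff_null_sets by blast
  then have "AE z in lebesgue. z \<notin> {x::'a. x \<bullet> b = 0}" by (rule AE_not_in)
  then show "AE z in lborel. z \<bullet> b \<noteq> 0" by (simp add: AE_completion_iff)
qed

lemma psi_lower:
  fixes a b r t :: real
  assumes "0 \<le> a" "a \<le> b" "t \<noteq> 0" "\<bar>t\<bar> \<le> r"
  defines "\<phi> \<equiv> \<lambda>t::real. (if t \<in> {0..1} then t powr (-a) else 0) + (if t \<in> {1..} then t powr (-b) else 0)"
  shows "min (r powr (-a)) (r powr (-b)) \<le> \<phi> t + \<phi> (-t)"
proof -
  have nn: "\<phi> u \<ge> 0" for u unfolding \<phi>_def by auto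
  have key: "min (r powr (-a)) (r powr (-b)) \<le> \<phi> u" if u: "0 < u" "u \<le> r" for u
  proof (cases "u \<le> 1")
    case True
    have "r powr (-a) \<le> u powr (-a)" by (rule powr_mono2') (use assms u in auto)
    moreover have "u powr (-a) \<le> \<phi> u" unfolding \<phi>_def using True u by auto
    ultimately show ?thesis by linarith
  next
    case False
    have "r powr (-b) \<le> u powr (-b)" by (rule powr_mono2') (use assms u in auto)
    moreover have "u powr (-b) \<le> \<phi> u" unfolding \<phi>_def using False u by auto
    ultimately show ?thesis by linarith
  qed
  show ?thesis
  proof (cases "t > 0")
    case True
    then show ?thesis using key[of t] nn[of "-t"] assms by auto
  next
    case False
    then show ?thesis using key[of "-t"] nn[of t] assms by auto
  qed
qed

lemma k0_integrable:
  fixes s :: real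
  assumes s: "0 < s" "s < 1/2"
  shows "integrable lborel (\<lambda>z::'a::euclidean_space. min (norm z) 1 / norm z powr (real DIM('a) + 2 * s))"
proof -
  define n where "n = real DIM('a)"
  have n1: "n \<ge> 1" unfolding n_def using DIM_positive by (simp add: Suc_le_eq)
  define a where "a = (n - 1 + 2 * s) / n"
  define b where "b = (n + 2 * s) / n"
  have a0: "0 \<le> a" and a1: "a < 1" and ab: "a \<le> b" and b1: "1 < b"
    using n1 s by (auto simp: a_def b_def field_simps)
  define \<phi> where "\<phi> \<equiv> \<lambda>t::real. (if t \<in> {0..1} then t powr (-a) else 0) + (if t \<in> {1..} then t powr (-b) else 0)"
  define \<psi> where "\<psi> = (\<lambda>t. \<phi> t + \<phi> (-t))"
  have psi_nn: "\<psi> t \<ge> 0" for t unfolding \<psi>_def \<phi>_def by auto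
  have psi_m[measurable]: "\<psi> \<in> borel_measurable borel" unfolding \<psi>_def \<phi>_def by measurable
  have fin1: "(\<integral>\<^sup>+t. ennreal (\<psi> t) \<partial>lborel) < \<infinity>"
    unfolding \<psi>_def \<phi>_def by (rule one_dim[OF a1 b1])
  let ?k = "\<lambda>z::'a. min (norm z) 1 / norm z powr (real DIM('a) + 2 * s)"
  have pw: "\<And>a r. 0 < r \<Longrightarrow> (r powr a) ^ DIM('a) = r powr (a * n)"
    by (simp add: powr_power n_def mult.commute)
  have bound: "?k z \<le> (\<Prod>c\<in>Basis. \<psi> (z \<bullet> c))" if z: "\<forall>c\<in>Basis. z \<bullet> c \<noteq> 0" for z
  proof -
    define r where "r = norm z"
    obtain c0 :: 'a where c0: "c0 \<in> Basis" using nonempty_Basis by blast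
    have "z \<noteq> 0" using z c0 by auto
    then have r0: "r > 0" unfolding r_def by simp
    define m where "m = min (r powr (-a)) (r powr (-b))"
    have m0: "m \<ge> 0" unfolding m_def by simp
    have "\<forall>c\<in>Basis. m \<le> \<psi> (z \<bullet> c)"
    proof
      fix c :: 'a assume c: "c \<in> Basis"
      have "\<bar>z \<bullet> c\<bar> \<le> r" unfolding r_def using Basis_le_norm[OF c] by simp
      then show "m \<le> \<psi> (z \<bullet> c)" unfolding m_def \<psi>_def \<phi>_def
        by (intro psi_lower a0 ab) (use z c in auto)
    qed
    then have "(\<Prod>c\<in>(Basis::'a set). m) \<le> (\<Prod>c\<in>Basis. \<psi> (z \<bullet> c))"
      by (intro prod_mono) (use m0 in auto)
    then have P: "m ^ DIM('a) \<le> (\<Prod>c\<in>Basis. \<psi> (z \<bullet> c))" by simp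
    have "?k z = m ^ DIM('a)"
    proof (cases "r \<le> 1")
      case True
      have "r powr (-a) \<le> r powr (-b)" using True r0 ab by (intro powr_mono') auto
      then have "m = r powr (-a)" unfolding m_def by simp
      have e: "-a * n = 1 - (n + 2 * s)" using n1 by (simp add: a_def)
      have "m ^ DIM('a) = r powr (-a * n)" using pw r0 \<open>m = r powr (-a)\<close> by simp
      also have "\<dots> = r powr (1 - (n + 2 * s))" by (simp only: e)
      also have "\<dots> = r / r powr (n + 2 * s)" using r0 by (simp add: powr_diff)
      also have "\<dots> = ?k z" using True by (simp add: r_def n_def)
      finally show ?thesis by simp
    next
      case False
      have "r powr (-b) \<le> r powr (-a)" using False r0 ab by (intro powr_mono) auto
      then have "m = r powr (-b)" unfolding m_def by simp
      have e2: "-b * n = -(n + 2 * s)" using n1 by (simp add: b_def)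
      have "m ^ DIM('a) = r powr (-b * n)" using pw r0 \<open>m = r powr (-b)\<close> by simp
      also have "\<dots> = r powr (-(n + 2 * s))" by (simp only: e2)
      also have "\<dots> = 1 / r powr (n + 2 * s)" by (rule powr_minus_divide)
      also have "\<dots> = ?k z" using False by (simp add: r_def n_def)
      finally show ?thesis by simp
    qed
    with P show ?thesis by simp
  qed
  show ?thesis
  proof (rule integrableI_nonneg)
    show "?k \<in> borel_measurable lborel" by measurable
    show "AE x in lborel. 0 \<le> ?k x" by auto
    have "(\<integral>\<^sup>+z. ennreal (?k z) \<partial>lborel) \<le> (\<integral>\<^sup>+z. (\<Prod>c\<in>(Basis::'a set). ennreal (\<psi> (z \<bullet> c))) \<partial>lborel)"
    proof (rule nn_integral_mono_AE)
      show "AE z in lborel. ennreal (?k z) \<le> (\<Prod>c\<in>(Basis::'a set). ennreal (\<psi> (z \<bullet> c)))"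
        using AE_coords_nonzero
      proof eventually_elim
        case (elim z)
        then show ?case using bound[OF elim] by (simp add: prod_ennreal psi_nn ennreal_leI)
      qed
    qed
    also have "\<dots> = (\<Prod>c\<in>(Basis::'a set). (\<integral>\<^sup>+t. ennreal (\<psi> t) \<partial>lborel))"
      by (rule nn_integral_lborel_prod) auto
    also have "\<dots> < \<infinity>" using fin1 by (simp add: power_less_top_ennreal)
    finally show "(\<integral>\<^sup>+z. ennreal (?k z) \<partial>lborel) < \<infinity>" .
  qed
qed

lemma G_integrable:
  fixes k :: "'a::euclidean_space \<Rightarrow> real"
  assumes ki: "integrable lborel k" and knn: "\<And>z. k z \<ge> 0"
  shows "integrable lborel (\<lambda>(x::'a, y::'a). indicator (cball 0 R) x * k (y - x))"
proof -
  have km[measurable]: "k \<in> borel_measurable borel"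
    using borel_measurable_integrable[OF ki] by simp
  let ?G = "\<lambda>(x::'a, y::'a). indicator (cball 0 R) x * k (y - x)"
  have d[measurable]: "(\<lambda>p::'a \<times> 'a. snd p - fst p) \<in> borel_measurable borel"
    by (intro borel_measurable_continuous_onI continuous_intros)
  have f[measurable]: "(\<lambda>p::'a \<times> 'a. fst p) \<in> borel_measurable borel"
    by (intro borel_measurable_continuous_onI continuous_intros)
  have i: "(indicator (cball (0::'a) R) :: 'a \<Rightarrow> real) \<in> borel_measurable borel"
    by (rule borel_measurable_indicator) simp
  have "(\<lambda>p::'a \<times> 'a. indicator (cball 0 R) (fst p) * k (snd p - fst p)) \<in> borel_measurable borel"
    by (intro borel_measurable_times measurable_compose[OF f i] measurable_compose[OF d km])
  moreover have "(\<lambda>p::'a \<times> 'a. indicator (cball 0 R) (fst p) * k (snd p - fst p)) = ?G"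
    by (auto simp: fun_eq_iff)
  ultimately have "?G \<in> borel_measurable borel" by simp
  then have Gm: "?G \<in> borel_measurable (lborel \<Otimes>\<^sub>M lborel)"
    by (simp add: lborel_prod)
  have Ik: "(\<integral>\<^sup>+z. ennreal (k z) \<partial>lborel) < \<infinity>"
    using ki by (simp add: integrable_iff_bounded knn)
  have shift: "(\<integral>\<^sup>+y. ennreal (k (y - x)) \<partial>lborel) = (\<integral>\<^sup>+z. ennreal (k z) \<partial>lborel)" for x :: 'a
  proof -
    have "(\<integral>\<^sup>+y. ennreal (k (y - x)) \<partial>lborel) = (\<integral>\<^sup>+y. ennreal (k y) \<partial>(distr lborel borel ((+) (-x))))"
      by (subst nn_integral_distr) auto
    also have "\<dots> = (\<integral>\<^sup>+z. ennreal (k z) \<partial>lborel)" by (simp add: lborel_distr_plus)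
    finally show ?thesis .
  qed
  have inner: "(\<integral>\<^sup>+y. ennreal (?G (x, y)) \<partial>lborel) = indicator (cball 0 R) x * (\<integral>\<^sup>+z. ennreal (k z) \<partial>lborel)" for x
    by (cases "x \<in> cball 0 R") (simp_all add: shift)
  have "(\<integral>\<^sup>+p. ennreal (?G p) \<partial>(lborel \<Otimes>\<^sub>M lborel)) = (\<integral>\<^sup>+x. \<integral>\<^sup>+y. ennreal (?G (x, y)) \<partial>lborel \<partial>lborel)"
    by (rule lborel.nn_integral_fst[symmetric]) (use Gm in measurable)
  also have "\<dots> = (\<integral>\<^sup>+x. indicator (cball 0 R) (x::'a) * (\<integral>\<^sup>+z. ennreal (k z) \<partial>lborel) \<partial>lborel)"
    using inner by simp
  also have "\<dots> = (\<integral>\<^sup>+z. ennreal (k z) \<partial>lborel) * emeasure lborel (cball (0::'a) R)"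
    by (subst nn_integral_multc) (auto simp: mult.commute intro: borel_measurable_indicator)
  also have "\<dots> < \<infinity>" using Ik emeasure_lborel_cball_finite[of "0::'a" R] by (simp add: ennreal_mult_less_top)
  finally have fin: "(\<integral>\<^sup>+p. ennreal (?G p) \<partial>(lborel \<Otimes>\<^sub>M lborel)) < \<infinity>" .
  have "integrable (lborel \<Otimes>\<^sub>M lborel) ?G"
    by (rule integrableI_nonneg[OF Gm _ fin]) (auto simp: knn)
  then show ?thesis by (simp add: lborel_prod)
qed

lemma tf_differentiable:
  assumes "test_function f" shows "f differentiable (at x)"
proof -
  have "\<forall>vs x. ddiff f vs differentiable (at x)" using assms by (simp add: test_function_def smooth_def)
  then have "ddiff f [] differentiable (at x)" by blast
  then show ?thesis by simp
qed

lemma tf_deriv_cont: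
  assumes "test_function f" shows "continuous_on UNIV (\<lambda>x. frechet_derivative f (at x) v)"
proof -
  have "\<forall>vs x. ddiff f vs differentiable (at x)" using assms by (simp add: test_function_def smooth_def)
  then have "\<forall>x. ddiff f [v] differentiable (at x)" by blast
  then have "\<forall>x. (\<lambda>x. frechet_derivative f (at x) v) differentiable (at x)" by simp
  then show ?thesis
    by (intro continuous_at_imp_continuous_on ballI differentiable_imp_continuous_within) blast
qed

lemma tf_outside:
  fixes f :: "'a::real_normed_vector \<Rightarrow> real"
  assumes "x \<notin> fsupport f"
  shows "f x = 0" and "frechet_derivative f (at x) v = 0"
proof -
  have z: "f y = 0" if "y \<notin> fsupport f" for y
    using that closure_subset[of "{x. f x \<noteq> 0}"] unfolding fsupport_def by auto
  then show "f x = 0" using assms by simp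
  have "((\<lambda>_. 0::real) has_derivative (\<lambda>_. 0)) (at x)" by simp
  then have "(f has_derivative (\<lambda>_. 0)) (at x)"
  proof (rule has_derivative_transform_within_open[where s="- fsupport f"])
    show "open (- fsupport f)" unfolding fsupport_def by (intro open_Compl closed_closure)
    show "x \<in> - fsupport f" using assms by simp
    fix y assume "y \<in> - fsupport f"
    then show "0 = f y" using z by simp
  qed
  then have "(\<lambda>_. 0) = frechet_derivative f (at x)" by (rule frechet_derivative_at)
  then show "frechet_derivative f (at x) v = 0" by (simp add: fun_eq_iff)
qed

lemma bdd_compact_support:
  fixes g :: "'b::euclidean_space \<Rightarrow> real"
  assumes "continuous_on UNIV g" "compact K" "\<And>x. x \<notin> K \<Longrightarrow> g x = 0"
  shows "bdd_above (range (\<lambda>x. \<bar>g x\<bar>))"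
proof -
  have "compact (g ` K)"
    by (rule compact_continuous_image[OF continuous_on_subset[OF assms(1)] assms(2)]) simp
  then have "bounded (g ` K)" by (rule compact_imp_bounded)
  then obtain B where B: "\<forall>y\<in>g ` K. norm y \<le> B" unfolding bounded_iff by blast
  have b: "\<bar>g x\<bar> \<le> max B 0" for x
  proof (cases "x \<in> K")
    case True
    then have "g x \<in> g ` K" by simp
    with B have "norm (g x) \<le> B" by blast
    then show ?thesis by simp
  next
    case False
    then show ?thesis using assms(3)[of x] by simp
  qed
  show ?thesis by (rule bdd_aboveI2[where M="max B 0"]) (rule b)
qed

lemma Cm1_bounds:
  fixes \<Phi> :: "'b::euclidean_space \<Rightarrow> real"
  assumes tf: "test_function \<Phi>"
  shows "\<bar>\<Phi> p\<bar> \<le> Cm_seminorm 1 \<Phi>" and "\<bar>\<Phi> p - \<Phi> q\<bar> \<le> Cm_seminorm 1 \<Phi> * norm (p - q)"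
proof -
  have K: "compact (fsupport \<Phi>)" using tf unfolding test_function_def by simp
  define D where "D = (\<lambda>b x. frechet_derivative \<Phi> (at x) b)"
  have bd0: "bdd_above (range (\<lambda>x. \<bar>\<Phi> x\<bar>))"
  proof (rule bdd_compact_support[OF _ K])
    show "continuous_on UNIV \<Phi>"
      by (rule differentiable_imp_continuous_on) (simp add: differentiable_on_def tf_differentiable[OF tf])
  qed (rule tf_outside(1))
  have bdD: "bdd_above (range (\<lambda>x. \<bar>D b x\<bar>))" for b
    unfolding D_def by (rule bdd_compact_support[OF tf_deriv_cont[OF tf] K tf_outside(2)])
  define M where "M = (SUP x. \<bar>\<Phi> x\<bar>)"
  define Lb where "Lb = (\<lambda>b. SUP x. \<bar>D b x\<bar>)"
  have M: "\<bar>\<Phi> x\<bar> \<le> M" for x unfolding M_def by (rule cSUP_upper[OF _ bd0]) simp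
  have Lb: "\<bar>D b x\<bar> \<le> Lb b" for b x unfolding Lb_def by (rule cSUP_upper[OF _ bdD]) simp
  have Lb0: "0 \<le> Lb b" for b using Lb[of b 0] by linarith
  define L where "L = (\<Sum>b\<in>Basis. Lb b)"
  have A: "{vs. set vs \<subseteq> (Basis::'b set) \<and> length vs \<le> 1} = insert [] ((\<lambda>b. [b]) ` Basis)"
  proof (intro set_eqI iffI)
    fix vs :: "'b list" assume "vs \<in> {vs. set vs \<subseteq> Basis \<and> length vs \<le> 1}"
    then show "vs \<in> insert [] ((\<lambda>b. [b]) ` Basis)"
      by (cases vs) auto
  qed auto
  have S: "Cm_seminorm 1 \<Phi> = M + L"
  proof -
    have i: "inj_on (\<lambda>b::'b. [b]) Basis" by (simp add: inj_on_def)
    have n: "[] \<notin> (\<lambda>b::'b. [b]) ` Basis" by blast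
    have "Cm_seminorm 1 \<Phi> = (\<Sum>vs\<in>insert [] ((\<lambda>b. [b]) ` Basis). (SUP x. \<bar>ddiff \<Phi> vs x\<bar>))"
      unfolding Cm_seminorm_def A ..
    also have "\<dots> = (SUP x. \<bar>ddiff \<Phi> [] x\<bar>) + (\<Sum>vs\<in>(\<lambda>b. [b]) ` Basis. (SUP x. \<bar>ddiff \<Phi> vs x\<bar>))"
      by (rule sum.insert[OF finite_imageI[OF finite_Basis] n])
    also have "(\<Sum>vs\<in>(\<lambda>b. [b]) ` Basis. (SUP x. \<bar>ddiff \<Phi> vs x\<bar>)) = (\<Sum>b\<in>Basis. (SUP x. \<bar>ddiff \<Phi> [b] x\<bar>))"
      by (subst sum.reindex[OF i]) (simp add: o_def)
    finally show ?thesis by (simp add: M_def L_def Lb_def D_def)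
  qed
  have L0: "0 \<le> L" unfolding L_def by (intro sum_nonneg Lb0)
  show "\<bar>\<Phi> p\<bar> \<le> Cm_seminorm 1 \<Phi>" using M[of p] L0 S by linarith
  have dv: "(\<Phi> has_derivative frechet_derivative \<Phi> (at x)) (at x)" for x
    using tf_differentiable[OF tf] frechet_derivative_works by blast
  have on: "onorm (frechet_derivative \<Phi> (at x)) \<le> L" for x
  proof (rule onorm_le)
    fix h :: 'b
    have lin: "linear (frechet_derivative \<Phi> (at x))"
      using dv[of x] has_derivative_linear by blast
    have "frechet_derivative \<Phi> (at x) h = frechet_derivative \<Phi> (at x) (\<Sum>b\<in>Basis. (h \<bullet> b) *\<^sub>R b)"
      by (simp add: euclidean_representation)
    also have "\<dots> = (\<Sum>b\<in>Basis. (h \<bullet> b) * D b x)"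
      using lin by (simp add: linear_sum linear_scale D_def)
    finally have eq: "frechet_derivative \<Phi> (at x) h = (\<Sum>b\<in>Basis. (h \<bullet> b) * D b x)" .
    have "\<bar>\<Sum>b\<in>Basis. (h \<bullet> b) * D b x\<bar> \<le> (\<Sum>b\<in>Basis. \<bar>(h \<bullet> b) * D b x\<bar>)" by (rule sum_abs)
    also have "\<dots> \<le> (\<Sum>b\<in>Basis. norm h * Lb b)"
    proof (rule sum_mono)
      fix b :: 'b assume b: "b \<in> Basis"
      show "\<bar>(h \<bullet> b) * D b x\<bar> \<le> norm h * Lb b"
        unfolding abs_mult using Basis_le_norm[OF b, of h] Lb[of b x]
        by (intro mult_mono) auto
    qed
    finally show "norm (frechet_derivative \<Phi> (at x) h) \<le> L * norm h"
      using eq by (simp add: L_def sum_distrib_left mult.commute)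
  qed
  have "norm (\<Phi> p - \<Phi> q) \<le> L * norm (p - q)"
    by (rule differentiable_bound[OF convex_UNIV dv on UNIV_I UNIV_I])
  also have "\<dots> \<le> Cm_seminorm 1 \<Phi> * norm (p - q)"
    using S M[of p] by (intro mult_right_mono) auto
  finally show "\<bar>\<Phi> p - \<Phi> q\<bar> \<le> Cm_seminorm 1 \<Phi> * norm (p - q)" by simp
qed

lemma pt_bound:
  fixes \<Phi> :: "('a::euclidean_space \<times> 'a) \<Rightarrow> real"
  assumes tf: "test_function \<Phi>" and sub: "fsupport \<Phi> \<subseteq> cball 0 R"
  shows "\<bar>(\<Phi> (x, y) - \<Phi> (x, x)) / norm (x - y) powr c\<bar>
           \<le> 2 * Cm_seminorm 1 \<Phi> * (indicator (cball 0 R) x * (min (norm (y - x)) 1 / norm (y - x) powr c))"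
proof -
  define S where "S = Cm_seminorm 1 \<Phi>"
  have S0: "0 \<le> S" using Cm1_bounds(1)[OF tf, of "(x, y)"] unfolding S_def by linarith
  have k0: "0 \<le> min (norm (y - x)) 1 / norm (y - x) powr c" by simp
  have z: "\<Phi> p = 0" if "p \<notin> cball 0 R" for p using tf_outside(1)[of p \<Phi>] sub that by blast
  show ?thesis
  proof (cases "\<Phi> (x, y) = 0 \<and> \<Phi> (x, x) = 0")
    case True
    then show ?thesis using S0 k0 unfolding S_def[symmetric] by simp
  next
    case False
    have "norm x \<le> R"
    proof (cases "\<Phi> (x, y) = 0")
      case True
      with False have "(x, x) \<in> cball 0 R" using z by blast
      then show ?thesis using norm_fst_le[of x x] by simp
    next
      case False
      then have "(x, y) \<in> cball 0 R" using z by blast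
      then show ?thesis using norm_fst_le[of x y] by simp
    qed
    then have ind: "indicator (cball 0 R) x = (1::real)" by simp
    show ?thesis
    proof (cases "x = y")
      case True
      then show ?thesis using S0 k0 ind unfolding S_def[symmetric] by simp
    next
      case False
      define r where "r = norm (y - x)"
      have r0: "r > 0" using False unfolding r_def by simp
      have rr: "norm (x - y) = r" unfolding r_def by (rule norm_minus_commute)
      have "\<bar>\<Phi> (x, y) - \<Phi> (x, x)\<bar> \<le> S * norm ((x, y) - (x, x))"
        using Cm1_bounds(2)[OF tf] unfolding S_def by blast
      also have "norm ((x, y) - (x, x)) = r" unfolding r_def by (simp add: norm_Pair)
      finally have b1: "\<bar>\<Phi> (x, y) - \<Phi> (x, x)\<bar> \<le> S * r" .
      have b2: "\<bar>\<Phi> (x, y) - \<Phi> (x, x)\<bar> \<le> 2 * S"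
        using Cm1_bounds(1)[OF tf, of "(x, y)"] Cm1_bounds(1)[OF tf, of "(x, x)"] unfolding S_def by linarith
      have b: "\<bar>\<Phi> (x, y) - \<Phi> (x, x)\<bar> \<le> 2 * S * min r 1"
      proof (cases "r \<le> 1")
        case True
        then show ?thesis using b1 S0 r0 by (simp add: min_def)
      next
        case False
        then show ?thesis using b2 by (simp add: min_def)
      qed
      have p0: "r powr c > 0" using r0 by simp
      have "\<bar>(\<Phi> (x, y) - \<Phi> (x, x)) / norm (x - y) powr c\<bar> = \<bar>\<Phi> (x, y) - \<Phi> (x, x)\<bar> / r powr c"
        using p0 rr by (simp add: abs_divide)
      also have "\<dots> \<le> 2 * S * min r 1 / r powr c"
        by (rule divide_right_mono[OF b]) (use p0 in simp)
      also have "\<dots> = 2 * S * (indicator (cball 0 R) x * (min (norm (y - x)) 1 / norm (y - x) powr c))"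
        using ind unfolding r_def by simp
      finally show ?thesis unfolding S_def .
    qed
  qed
qed

lemma g_measurable:
  fixes \<Phi> :: "('a::euclidean_space \<times> 'a) \<Rightarrow> real"
  assumes tf: "test_function \<Phi>"
  shows "(\<lambda>(x, y). (\<Phi> (x, y) - \<Phi> (x, x)) / norm (x - y) powr c) \<in> borel_measurable lborel"
proof -
  have cP: "continuous_on UNIV \<Phi>"
    by (rule differentiable_imp_continuous_on) (simp add: differentiable_on_def tf_differentiable[OF tf])
  define A where "A = (\<lambda>p::'a \<times> 'a. \<Phi> p - \<Phi> (fst p, fst p))"
  define B where "B = (\<lambda>p::'a \<times> 'a. norm (fst p - snd p))"
  have "continuous_on UNIV A" unfolding A_def
    by (intro continuous_intros continuous_on_compose2[OF cP]) auto
  then have [measurable]: "A \<in> borel_measurable borel" by (rule borel_measurable_continuous_onI)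
  have "continuous_on UNIV B" unfolding B_def by (intro continuous_intros)
  then have [measurable]: "B \<in> borel_measurable borel" by (rule borel_measurable_continuous_onI)
  have "(\<lambda>p. A p / B p powr c) \<in> borel_measurable borel" by measurable
  moreover have "(\<lambda>p. A p / B p powr c) = (\<lambda>(x, y). (\<Phi> (x, y) - \<Phi> (x, x)) / norm (x - y) powr c)"
    by (auto simp: A_def B_def fun_eq_iff)
  ultimately show ?thesis by simp
qed

theorem lemma7p1:
  fixes s :: real
  assumes "0 < s" and "s < 1/2"
  shows "(\<forall>\<Phi> :: ('a::euclidean_space \<times> 'a) \<Rightarrow> real. test_function \<Phi> \<longrightarrow>
            integrable lborel
              (\<lambda>(x, y). (\<Phi> (x, y) - \<Phi> (x, x)) / norm (x - y) powr (real DIM('a) + 2 * s)))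
       \<and> is_distribution
           (\<lambda>\<Phi> :: ('a \<times> 'a) \<Rightarrow> real.
              \<integral>z. (\<lambda>(x, y). (\<Phi> (x, y) - \<Phi> (x, x)) / norm (x - y) powr (real DIM('a) + 2 * s)) z \<partial>lborel)"
proof -
  define c where "c = real DIM('a) + 2 * s"
  define k0 where "k0 = (\<lambda>z::'a. min (norm z) 1 / norm z powr c)"
  have k0i: "integrable lborel k0" unfolding k0_def c_def by (rule k0_integrable[OF assms])
  have k0nn: "k0 z \<ge> 0" for z unfolding k0_def by simp
  define G where "G = (\<lambda>R. \<lambda>(x::'a, y::'a). indicator (cball 0 R) x * k0 (y - x))"
  have Gi: "integrable lborel (G R)" for R unfolding G_def by (rule G_integrable[OF k0i k0nn])
  have Gnn: "G R p \<ge> 0" for R p unfolding G_def using k0nn by (auto simp: indicator_def split: prod.split)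
  define g where "g = (\<lambda>\<Phi> :: ('a \<times> 'a) \<Rightarrow> real. \<lambda>(x, y). (\<Phi> (x, y) - \<Phi> (x, x)) / norm (x - y) powr c)"
  have gb: "\<bar>g \<Phi> p\<bar> \<le> 2 * Cm_seminorm 1 \<Phi> * G R p" if "test_function \<Phi>" "fsupport \<Phi> \<subseteq> cball 0 R" for \<Phi> R p
    using pt_bound[OF that, of "fst p" "snd p" c] unfolding g_def G_def k0_def by (simp add: case_prod_beta)
  have gi: "integrable lborel (g \<Phi>)" if tf: "test_function \<Phi>" for \<Phi>
  proof -
    have "bounded (fsupport \<Phi>)" using tf unfolding test_function_def by (simp add: compact_imp_bounded)
    then obtain R where "\<forall>p\<in>fsupport \<Phi>. norm p \<le> R" unfolding bounded_iff by blast
    then have sub: "fsupport \<Phi> \<subseteq> cball 0 R" by auto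
    show ?thesis
    proof (rule Bochner_Integration.integrable_bound[where f="\<lambda>p. 2 * Cm_seminorm 1 \<Phi> * G R p"])
      show "integrable lborel (\<lambda>p. 2 * Cm_seminorm 1 \<Phi> * G R p)" by (intro integrable_mult_right Gi)
      show "g \<Phi> \<in> borel_measurable lborel" unfolding g_def by (rule g_measurable[OF tf])
      show "AE p in lborel. norm (g \<Phi> p) \<le> norm (2 * Cm_seminorm 1 \<Phi> * G R p)"
        using gb[OF tf sub] by (auto intro!: AE_I2 order_trans[OF _ abs_ge_self])
    qed
  qed
  have part1: "\<forall>\<Phi> :: ('a \<times> 'a) \<Rightarrow> real. test_function \<Phi> \<longrightarrow> integrable lborel (g \<Phi>)"
    using gi by blast
  have lin: "(\<integral>z. g (\<lambda>x. a * f x + b * h x) z \<partial>lborel) = a * (\<integral>z. g f z \<partial>lborel) + b * (\<integral>z. g h z \<partial>lborel)"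
    if "test_function f" "test_function h" for f h and a b :: real
  proof -
    have "g (\<lambda>x. a * f x + b * h x) = (\<lambda>z. a * g f z + b * g h z)"
      unfolding g_def by (auto simp: fun_eq_iff field_simps diff_divide_distrib add_divide_distrib)
    then show ?thesis
      using gi[OF that(1)] gi[OF that(2)] by (simp add: integral_add integrable_mult_right)
  qed
  have bnd: "\<exists>C m. \<forall>\<phi>. test_function \<phi> \<longrightarrow> fsupport \<phi> \<subseteq> K \<longrightarrow>
        \<bar>\<integral>z. g \<phi> z \<partial>lborel\<bar> \<le> C * Cm_seminorm m \<phi>" if K: "compact K" for K :: "('a \<times> 'a) set"
  proof -
    have "bounded K" using K by (rule compact_imp_bounded)
    then obtain R where "\<forall>p\<in>K. norm p \<le> R" unfolding bounded_iff by blast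
    then have sub: "K \<subseteq> cball 0 R" by auto
    have "\<forall>\<phi>. test_function \<phi> \<longrightarrow> fsupport \<phi> \<subseteq> K \<longrightarrow>
        \<bar>\<integral>z. g \<phi> z \<partial>lborel\<bar> \<le> (2 * (\<integral>z. G R z \<partial>lborel)) * Cm_seminorm 1 \<phi>"
    proof (intro allI impI)
      fix \<phi> :: "('a \<times> 'a) \<Rightarrow> real" assume tf: "test_function \<phi>" and "fsupport \<phi> \<subseteq> K"
      then have sp: "fsupport \<phi> \<subseteq> cball 0 R" using sub by blast
      have "\<bar>\<integral>z. g \<phi> z \<partial>lborel\<bar> \<le> (\<integral>z. 2 * Cm_seminorm 1 \<phi> * G R z \<partial>lborel)"
        by (rule integral_abs_bound_integral[OF gi[OF tf]]) (use gb[OF tf sp] Gi in \<open>auto intro: integrable_mult_right\<close>)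
      also have "\<dots> = (2 * (\<integral>z. G R z \<partial>lborel)) * Cm_seminorm 1 \<phi>" by simp
      finally show "\<bar>\<integral>z. g \<phi> z \<partial>lborel\<bar> \<le> (2 * (\<integral>z. G R z \<partial>lborel)) * Cm_seminorm 1 \<phi>" .
    qed
    then show ?thesis by blast
  qed
  have "is_distribution (\<lambda>\<Phi>. \<integral>z. g \<Phi> z \<partial>lborel)"
    unfolding is_distribution_def using lin bnd by blast
  with part1 show ?thesis unfolding g_def c_def by simp
qed

end
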